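(* Let $n\ge 4$ and $t\in[n-1]$ be integers, and let $S$ be a weak $(2n-2t)$-resolving set of $K_n\times K_n$, with $\overline{S}=V\setminus S$. For all distinct $i,i'\in[n]$: if there is some $j\in[n]$ with $(i,j)\in\overline S$ and $(i',j)\in\overline S$, then $|(L_i\cup L_{i'})\cap\overline S|\le 2t$; otherwise $|(L_i\cup L_{i'})\cap\overline S|\le 2t+1$.
   Context: $K_n\times K_n$ is the direct product of two complete graphs on $n$ vertices: vertex set $V=[n]\times[n]$ with $[n]=\{1,\dots,n\}$, and $(i,j)$ adjacent to $(i',j')$ iff $i\ne i'$ and $j\ne j'$. For $i\in[n]$, $L_i=\{(i,j):j\in[n]\}$ is a vertical layer. For vertices $x,y,z$ and $S\subseteq V$, $\Delta_z(x,y)=|d(x,z)-d(y,z)|$ (with $d$ the graph distance) and $\Delta_S(x,y)=\sum_{z\in S}\Delta_z(x,y)$. A set $S$ is a weak $k$-resolving set if $\Delta_S(x,y)\ge k$ for all distinct $x,y\in V$. *)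

theory Defs
  imports Main
begin

definition V :: "nat \<Rightarrow> (nat \<times> nat) set" where
  "V n = {1..n} \<times> {1..n}"

definition edges :: "nat \<Rightarrow> ((nat \<times> nat) \<times> (nat \<times> nat)) set" where
  "edges n = {(x, y). x \<in> V n \<and> y \<in> V n \<and> fst x \<noteq> fst y \<and> snd x \<noteq> snd y}"

definition gdist :: "nat \<Rightarrow> nat \<times> nat \<Rightarrow> nat \<times> nat \<Rightarrow> nat" where
  "gdist n x y = (LEAST k. (x, y) \<in> (edges n) ^^ k)"

definition Delta :: "nat \<Rightarrow> nat \<times> nat \<Rightarrow> nat \<times> nat \<Rightarrow> nat \<times> nat \<Rightarrow> nat" where
  "Delta n z x y = nat \<bar>int (gdist n x z) - int (gdist n y z)\<bar>"

definition DeltaS :: "nat \<Rightarrow> (nat \<times> nat) set \<Rightarrow> nat \<times> nat \<Rightarrow> nat \<times> nat \<Rightarrow> nat" where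
  "DeltaS n S x y = (\<Sum>z\<in>S. Delta n z x y)"

definition weak_k_resolving :: "nat \<Rightarrow> nat \<Rightarrow> (nat \<times> nat) set \<Rightarrow> bool" where
  "weak_k_resolving n k S \<longleftrightarrow> S \<subseteq> V n \<and>
     (\<forall>x\<in>V n. \<forall>y\<in>V n. x \<noteq> y \<longrightarrow> DeltaS n S x y \<ge> k)"

definition layer :: "nat \<Rightarrow> nat \<Rightarrow> (nat \<times> nat) set" where
  "layer n i = {(i, j) | j. j \<in> {1..n}}"

end

theory Submission
  imports Defs
begin

lemma two_avoid: "(3::nat) \<le> n \<Longrightarrow> \<exists>p\<in>{1..n}. p \<noteq> a \<and> p \<noteq> c"
proof -
  assume "3 \<le> n"
  have "\<exists>p\<in>{1,2,3::nat}. p \<noteq> a \<and> p \<noteq> c" by auto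
  then show ?thesis using \<open>3 \<le> n\<close> by auto
qed

lemma gdist_eq:
  assumes n: "3 \<le> n" and x: "x \<in> V n" and y: "y \<in> V n"
  shows "gdist n x y = (if x = y then 0 else if fst x \<noteq> fst y \<and> snd x \<noteq> snd y then 1 else 2)"
proof -
  have r0: "(x, y) \<in> edges n ^^ 0 \<longleftrightarrow> x = y" by simp
  have r1: "(x, y) \<in> edges n ^^ 1 \<longleftrightarrow> fst x \<noteq> fst y \<and> snd x \<noteq> snd y"
    using x y by (simp add: edges_def)
  have r2: "(x, y) \<in> edges n ^^ 2"
  proof -
    obtain a b where xab: "x = (a, b)" by (cases x)
    obtain c d where ycd: "y = (c, d)" by (cases y)
    obtain p where p: "p \<in> {1..n}" "p \<noteq> a" "p \<noteq> c" using two_avoid[OF n] by blast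
    obtain q where q: "q \<in> {1..n}" "q \<noteq> b" "q \<noteq> d" using two_avoid[OF n] by blast
    have m: "(p, q) \<in> V n" using p q by (simp add: V_def)
    have "(x, (p, q)) \<in> edges n" using x m p q xab by (auto simp: edges_def)
    moreover have "((p, q), y) \<in> edges n" using y m p q ycd by (auto simp: edges_def)
    ultimately show ?thesis unfolding numeral_2_eq_2 by (intro relpow_Suc_I2[of x "(p,q)"]) auto
  qed
  show ?thesis
  proof (cases "x = y")
    case True then show ?thesis unfolding gdist_def by simp
  next
    case False
    show ?thesis
    proof (cases "fst x \<noteq> fst y \<and> snd x \<noteq> snd y")
      case True
      then show ?thesis using False r0 r1 unfolding gdist_def
        by (intro trans[OF Least_equality]) (auto simp del: relpow.simps, metis One_nat_def less_one not_less relpow_1)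
    next
      case F2: False
      have "(LEAST k. (x, y) \<in> edges n ^^ k) = 2"
      proof (rule Least_equality)
        show "(x, y) \<in> edges n ^^ 2" by (rule r2)
        fix k assume k: "(x, y) \<in> edges n ^^ k"
        show "2 \<le> k"
        proof (rule ccontr)
          assume "\<not> 2 \<le> k"
          then have "k = 0 \<or> k = 1" by auto
          then show False using k r0 r1 False F2 by (auto simp del: relpow.simps)
        qed
      qed
      then show ?thesis using False F2 unfolding gdist_def by simp
    qed
  qed
qed

lemma Delta_bound:
  assumes n: "3 \<le> n" and i: "i \<noteq> i'" and x: "(i, j) \<in> V n" and y: "(i', j) \<in> V n"
    and z: "z \<in> V n"
  shows "Delta n z (i, j) (i', j) \<le>
    (if z \<in> layer n i \<union> layer n i' then 1 else 0) + (if z = (i, j) then 1 else 0)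
      + (if z = (i', j) then 1 else 0)"
proof -
  obtain a b where zab: "z = (a, b)" by (cases z)
  have lz: "z \<in> layer n i \<union> layer n i' \<longleftrightarrow> a = i \<or> a = i'"
    using z zab by (auto simp: layer_def V_def)
  show ?thesis
    unfolding Delta_def gdist_eq[OF n x z] gdist_eq[OF n y z] lz
    using i by (auto simp: zab)
qed

lemma card_sum_ind:
  assumes "finite S"
  shows "(\<Sum>z\<in>S. (if z \<in> A then 1 else 0::nat)) = card (S \<inter> A)"
  using assms by (simp add: sum.If_cases)

theorem mainTheorem7:
  fixes n t :: nat and S :: "(nat \<times> nat) set"
  assumes "n \<ge> 4" and "t \<in> {1..n-1}"
    and "weak_k_resolving n (2*n - 2*t) S"
  shows "\<forall>i\<in>{1..n}. \<forall>i'\<in>{1..n}. i \<noteq> i' \<longrightarrow>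
     ((\<exists>j\<in>{1..n}. (i, j) \<in> V n - S \<and> (i', j) \<in> V n - S) \<longrightarrow>
         card ((layer n i \<union> layer n i') \<inter> (V n - S)) \<le> 2*t) \<and>
     (\<not> (\<exists>j\<in>{1..n}. (i, j) \<in> V n - S \<and> (i', j) \<in> V n - S) \<longrightarrow>
         card ((layer n i \<union> layer n i') \<inter> (V n - S)) \<le> 2*t + 1)"
proof (intro ballI impI conjI)
  have n3: "3 \<le> n" using assms(1) by simp
  have SV: "S \<subseteq> V n" and res: "\<And>x y. x \<in> V n \<Longrightarrow> y \<in> V n \<Longrightarrow> x \<noteq> y \<Longrightarrow> 2*n - 2*t \<le> DeltaS n S x y"
    using assms(3) unfolding weak_k_resolving_def by auto
  have finV: "finite (V n)" by (simp add: V_def)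
  have finS: "finite S" using SV finV finite_subset by blast
  fix i i' assume i: "i \<in> {1..n}" and i': "i' \<in> {1..n}" and ii: "i \<noteq> i'"
  define A where "A = layer n i \<union> layer n i'"
  have AV: "A \<subseteq> V n" using i i' by (auto simp: A_def layer_def V_def)
  have finA: "finite A" using AV finV finite_subset by blast
  have li: "layer n i = (\<lambda>j. (i, j)) ` {1..n}" by (auto simp: layer_def)
  have li': "layer n i' = (\<lambda>j. (i', j)) ` {1..n}" by (auto simp: layer_def)
  have cl: "card (layer n i) = n" unfolding li by (subst card_image) (auto simp: inj_on_def)
  have cl': "card (layer n i') = n" unfolding li' by (subst card_image) (auto simp: inj_on_def)
  have disj: "layer n i \<inter> layer n i' = {}" using ii by (auto simp: layer_def)
  have cA: "card A = 2 * n" unfolding A_def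
    using card_Un_disjoint[of "layer n i" "layer n i'"] cl cl' disj li li' by simp
  have eqc: "card (A \<inter> (V n - S)) = 2 * n - card (S \<inter> A)"
  proof -
    have "A \<inter> (V n - S) = A - S \<inter> A" using AV by auto
    then show ?thesis using finA cA by (simp add: card_Diff_subset)
  qed
  have key: "2*n - 2*t \<le> card (S \<inter> A) + (if (i, j) \<in> S then 1 else 0) + (if (i', j) \<in> S then 1 else 0)"
    if j: "j \<in> {1..n}" for j
  proof -
    have x: "(i, j) \<in> V n" and y: "(i', j) \<in> V n" using i i' j by (auto simp: V_def)
    have "2*n - 2*t \<le> DeltaS n S (i, j) (i', j)" using res[OF x y] ii by simp
    also have "\<dots> \<le> (\<Sum>z\<in>S. (if z \<in> A then 1 else 0) + (if z = (i, j) then 1 else 0)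
      + (if z = (i', j) then 1 else 0))"
      unfolding DeltaS_def A_def
      by (rule sum_mono) (rule Delta_bound[OF n3 ii x y], use SV in blast)
    also have "\<dots> = card (S \<inter> A) + card (S \<inter> {(i, j)}) + card (S \<inter> {(i', j)})"
      unfolding sum.distrib using card_sum_ind[OF finS, of A] card_sum_ind[OF finS, of "{(i,j)}"]
        card_sum_ind[OF finS, of "{(i',j)}"] by simp
    also have "\<dots> = card (S \<inter> A) + (if (i, j) \<in> S then 1 else 0) + (if (i', j) \<in> S then 1 else 0)"
      by auto
    finally show ?thesis .
  qed
  have tn: "t \<le> n - 1" using assms(2) by simp
  {
    assume "\<exists>j\<in>{1..n}. (i, j) \<in> V n - S \<and> (i', j) \<in> V n - S"
    then obtain j where j: "j \<in> {1..n}" "(i, j) \<notin> S" "(i', j) \<notin> S" by blast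
    have "2*n - 2*t \<le> card (S \<inter> A)" using key[OF j(1)] j by simp
    then show "card ((layer n i \<union> layer n i') \<inter> (V n - S)) \<le> 2*t"
      using eqc tn unfolding A_def by linarith
  }
  {
    assume nj: "\<not> (\<exists>j\<in>{1..n}. (i, j) \<in> V n - S \<and> (i', j) \<in> V n - S)"
    have both: "(i, j) \<in> S \<or> (i', j) \<in> S" if "j \<in> {1..n}" for j
      using nj that i i' by (auto simp: V_def)
    show "card ((layer n i \<union> layer n i') \<inter> (V n - S)) \<le> 2*t + 1"
    proof (cases "\<exists>j\<in>{1..n}. \<not> ((i, j) \<in> S \<and> (i', j) \<in> S)")
      case True
      then obtain j where j: "j \<in> {1..n}" "\<not> ((i, j) \<in> S \<and> (i', j) \<in> S)" by blast
      have "2*n - 2*t \<le> card (S \<inter> A) + 1" using key[OF j(1)] j both[OF j(1)] by auto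
      then show ?thesis using eqc tn unfolding A_def by linarith
    next
      case False
      then have "A \<subseteq> S" by (auto simp: A_def layer_def)
      then have "A \<inter> (V n - S) = {}" by auto
      then show ?thesis unfolding A_def by simp
    qed
  }
qed

end
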